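(* Let $\|\!|\cdot|\!\|$ be any norm on $\ell^1$ equivalent to the usual norm, and let $Y=(\ell^1,\|\!|\cdot|\!\|)$ with closed unit ball $B_Y$. Let $(e_n)_{n\ge1}$ be the canonical basis of $\ell^1$, let $\tau$ be the weak$^\ast$ topology $\sigma(\ell^1,c_0)$, and let $$E=\left\{\tfrac{n}{n+1}\,\tfrac{e_n}{\|\!|e_n|\!\|}: n\in\mathbb{N}\right\}\cup\{0\},\qquad K=\overline{\mathrm{co}}^{\,\tau}(E).$$ Then $K=\overline{\mathrm{co}}(E)$ (norm closure), $K\subseteq B_Y$, $\sup\{\|\!|k|\!\|: k\in K\}=1$, and there is no $k\in K$ with $\|\!|k|\!\|=1$; in particular $K$ is a closed bounded convex subset of $Y$ that is not remotal from $0$.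
   Context: $\overline{\mathrm{co}}^{\,\tau}(E)$ denotes the $\tau$-closed convex hull and $\overline{\mathrm{co}}(E)$ the norm-closed convex hull. A set $C$ is remotal from $z$ if there exists $c_0\in C$ with $\|z-c_0\|=\sup\{\|z-c\|:c\in C\}$. *)

theory Defs
  imports "HOL-Analysis.Analysis"
begin

text \<open>Sequences are functions nat => real; coordinate k (k >= 0) of the sequence
corresponds to coordinate k+1 in the paper's indexing.\<close>

definition l1 :: "(nat \<Rightarrow> real) set" where
  "l1 = {x. summable (\<lambda>n. \<bar>x n\<bar>)}"

definition l1norm :: "(nat \<Rightarrow> real) \<Rightarrow> real" where
  "l1norm x = (\<Sum>n. \<bar>x n\<bar>)"

definition c0 :: "(nat \<Rightarrow> real) set" where
  "c0 = {y. y \<longlonglongrightarrow> 0}"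

definition vadd :: "(nat \<Rightarrow> real) \<Rightarrow> (nat \<Rightarrow> real) \<Rightarrow> (nat \<Rightarrow> real)" where
  "vadd x y = (\<lambda>n. x n + y n)"

definition vsub :: "(nat \<Rightarrow> real) \<Rightarrow> (nat \<Rightarrow> real) \<Rightarrow> (nat \<Rightarrow> real)" where
  "vsub x y = (\<lambda>n. x n - y n)"

definition vscale :: "real \<Rightarrow> (nat \<Rightarrow> real) \<Rightarrow> (nat \<Rightarrow> real)" where
  "vscale c x = (\<lambda>n. c * x n)"

definition ebasis :: "nat \<Rightarrow> (nat \<Rightarrow> real)" where
  "ebasis k = (\<lambda>n. if n = k then 1 else 0)"

definition equiv_l1_norm :: "((nat \<Rightarrow> real) \<Rightarrow> real) \<Rightarrow> bool" where
  "equiv_l1_norm N \<longleftrightarrow>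
     (\<forall>x\<in>l1. N x = 0 \<longleftrightarrow> x = (\<lambda>_. 0)) \<and>
     (\<forall>x\<in>l1. \<forall>c. N (vscale c x) = \<bar>c\<bar> * N x) \<and>
     (\<forall>x\<in>l1. \<forall>y\<in>l1. N (vadd x y) \<le> N x + N y) \<and>
     (\<exists>a b. 0 < a \<and> 0 < b \<and> (\<forall>x\<in>l1. a * l1norm x \<le> N x \<and> N x \<le> b * l1norm x))"

definition conv_set :: "(nat \<Rightarrow> real) set \<Rightarrow> bool" where
  "conv_set S \<longleftrightarrow> (\<forall>x\<in>S. \<forall>y\<in>S. \<forall>t::real. 0 \<le> t \<and> t \<le> 1 \<longrightarrow>
                       vadd (vscale (1 - t) x) (vscale t y) \<in> S)"

definition pair :: "(nat \<Rightarrow> real) \<Rightarrow> (nat \<Rightarrow> real) \<Rightarrow> real" where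
  "pair x y = (\<Sum>n. x n * y n)"

definition wstar_closed :: "(nat \<Rightarrow> real) set \<Rightarrow> bool" where
  "wstar_closed S \<longleftrightarrow> S \<subseteq> l1 \<and>
     (\<forall>x\<in>l1. (\<forall>F \<epsilon>. finite F \<and> F \<subseteq> c0 \<and> 0 < \<epsilon> \<longrightarrow>
                  (\<exists>s\<in>S. \<forall>y\<in>F. \<bar>pair (vsub s x) y\<bar> < \<epsilon>)) \<longrightarrow> x \<in> S)"

definition norm_closed :: "((nat \<Rightarrow> real) \<Rightarrow> real) \<Rightarrow> (nat \<Rightarrow> real) set \<Rightarrow> bool" where
  "norm_closed N S \<longleftrightarrow> S \<subseteq> l1 \<and>
     (\<forall>x\<in>l1. (\<forall>\<epsilon>>0. \<exists>s\<in>S. N (vsub s x) < \<epsilon>) \<longrightarrow> x \<in> S)"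

definition wstar_closed_hull :: "(nat \<Rightarrow> real) set \<Rightarrow> (nat \<Rightarrow> real) set" where
  "wstar_closed_hull E = \<Inter>{C. E \<subseteq> C \<and> conv_set C \<and> wstar_closed C}"

definition norm_closed_hull :: "((nat \<Rightarrow> real) \<Rightarrow> real) \<Rightarrow> (nat \<Rightarrow> real) set \<Rightarrow> (nat \<Rightarrow> real) set" where
  "norm_closed_hull N E = \<Inter>{C. E \<subseteq> C \<and> conv_set C \<and> norm_closed N C}"

definition remotal :: "((nat \<Rightarrow> real) \<Rightarrow> real) \<Rightarrow> (nat \<Rightarrow> real) set \<Rightarrow> (nat \<Rightarrow> real) \<Rightarrow> bool" where
  "remotal N C z \<longleftrightarrow> (\<exists>c0\<in>C. N (vsub z c0) = (SUP c\<in>C. N (vsub z c)))"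

end

theory Submission
  imports Defs
begin


lemma l1_summ: "x \<in> l1 \<Longrightarrow> summable (\<lambda>n. \<bar>x n\<bar>)" by (simp add: l1_def)

lemma l1_summ0: "x \<in> l1 \<Longrightarrow> summable x"
  using l1_summ summable_rabs_cancel by blast

lemma l1norm_nonneg: "x \<in> l1 \<Longrightarrow> 0 \<le> l1norm x"
  unfolding l1norm_def by (rule suminf_nonneg) (auto dest: l1_summ)

lemma l1_I: "summable (\<lambda>n. \<bar>x n\<bar>) \<Longrightarrow> x \<in> l1" by (simp add: l1_def)

lemma vadd_l1: "x \<in> l1 \<Longrightarrow> y \<in> l1 \<Longrightarrow> vadd x y \<in> l1"
  unfolding vadd_def
  apply (rule l1_I)
  apply (rule summable_comparison_test[of _ "\<lambda>n. \<bar>x n\<bar> + \<bar>y n\<bar>"])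
  by (auto intro!: summable_add l1_summ)

lemma vscale_l1: "x \<in> l1 \<Longrightarrow> vscale c x \<in> l1"
  unfolding vscale_def
  apply (rule l1_I)
  using summable_mult[OF l1_summ, of x "\<bar>c\<bar>"] by (simp add: abs_mult)

lemma vsub_l1: "x \<in> l1 \<Longrightarrow> y \<in> l1 \<Longrightarrow> vsub x y \<in> l1"
  unfolding vsub_def
  apply (rule l1_I)
  apply (rule summable_comparison_test[of _ "\<lambda>n. \<bar>x n\<bar> + \<bar>y n\<bar>"])
  by (auto intro!: summable_add l1_summ)

lemma finsupp_l1: "finite A \<Longrightarrow> (\<And>n. n \<notin> A \<Longrightarrow> x n = 0) \<Longrightarrow> x \<in> l1"
  by (rule l1_I, rule summable_finite[of A]) auto

lemma ebasis_l1: "ebasis k \<in> l1"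
  by (rule finsupp_l1[of "{k}"]) (auto simp: ebasis_def)

lemma l1norm_ebasis: "l1norm (ebasis k) = 1"
  unfolding l1norm_def by (subst suminf_finite[of "{k}"]) (auto simp: ebasis_def)

lemma zero_l1: "(\<lambda>_. 0::real) \<in> l1"
  by (rule finsupp_l1[of "{}"]) auto

lemma coord_le: "x \<in> l1 \<Longrightarrow> \<bar>x k\<bar> \<le> l1norm x"
  unfolding l1norm_def using sum_le_suminf[OF l1_summ, of x "{k}"] by auto

lemma pair_bound:
  assumes "x \<in> l1" "\<And>n. \<bar>y n\<bar> \<le> B"
  shows "\<bar>pair x y\<bar> \<le> B * l1norm x"
proof -
  have s1: "summable (\<lambda>n. B * \<bar>x n\<bar>)" using summable_mult[OF l1_summ[OF assms(1)]] by blast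
  have le: "\<bar>x n * y n\<bar> \<le> B * \<bar>x n\<bar>" for n
    using mult_left_mono[OF assms(2)[of n], of "\<bar>x n\<bar>"] by (simp add: abs_mult mult.commute)
  have s2: "summable (\<lambda>n. \<bar>x n * y n\<bar>)"
    by (rule summable_comparison_test[OF _ s1]) (use le in auto)
  have "\<bar>pair x y\<bar> \<le> (\<Sum>n. \<bar>x n * y n\<bar>)" unfolding pair_def by (rule summable_rabs[OF s2])
  also have "\<dots> \<le> (\<Sum>n. B * \<bar>x n\<bar>)" by (rule suminf_le[OF le s2 s1])
  also have "\<dots> = B * l1norm x" unfolding l1norm_def by (rule suminf_mult[OF l1_summ[OF assms(1)]])
  finally show ?thesis .
qed

lemma pair_fin:
  assumes "finite A" "\<And>n. n \<notin> A \<Longrightarrow> y n = 0"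
  shows "pair x y = (\<Sum>n\<in>A. x n * y n)"
  unfolding pair_def by (rule suminf_finite) (use assms in auto)



definition tt :: "nat \<Rightarrow> real" where "tt k = real (Suc k) / real (Suc k + 1)"
definition trunc :: "nat \<Rightarrow> (nat \<Rightarrow> real) \<Rightarrow> (nat \<Rightarrow> real)" where
  "trunc m x = (\<lambda>n. if n < m then x n else 0)"

lemma tt_pos: "0 < tt k" by (simp add: tt_def)
lemma tt_lt1: "tt k < 1" by (simp add: tt_def)
lemma tt_ge: "1/2 \<le> tt k" by (simp add: tt_def field_simps)

lemma trunc_l1: "trunc m x \<in> l1"
  by (rule finsupp_l1[of "{..<m}"]) (auto simp: trunc_def)

lemma tail_small:
  assumes "x \<in> l1" "0 < e"
  shows "\<exists>m. l1norm (vsub (trunc m x) x) < e"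
proof -
  let ?f = "\<lambda>n. \<bar>x n\<bar>"
  have sf: "summable ?f" using l1_summ[OF assms(1)] .
  from summable_LIMSEQ[OF sf] assms(2) obtain m where
    m: "\<bar>(\<Sum>i<m. ?f i) - suminf ?f\<bar> < e"
    unfolding LIMSEQ_iff real_norm_def by blast
  define g where "g n = (if n < m then 0 else ?f n)" for n
  define h where "h n = (if n < m then ?f n else 0)" for n
  have sh: "summable h" by (rule summable_finite[of "{..<m}"]) (auto simp: h_def)
  have sg: "summable g" by (rule summable_comparison_test[OF _ sf]) (auto simp: g_def)
  have "suminf ?f = suminf g + suminf h"
    using suminf_add[OF sg sh] by (simp add: g_def h_def if_distrib cong: if_cong)
  moreover have "suminf h = (\<Sum>i<m. ?f i)"
    by (subst suminf_finite[of "{..<m}"]) (auto simp: h_def)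
  moreover have "l1norm (vsub (trunc m x) x) = suminf g"
    unfolding l1norm_def g_def vsub_def trunc_def by (rule arg_cong[where f=suminf]) auto
  ultimately have "l1norm (vsub (trunc m x) x) < e" using m abs_less_iff[of "(\<Sum>i<m. ?f i) - suminf ?f" e] by linarith
  thus ?thesis by blast
qed

locale eqn =
  fixes N :: "(nat \<Rightarrow> real) \<Rightarrow> real" and lo hi :: real
  assumes zer: "x \<in> l1 \<Longrightarrow> N x = 0 \<longleftrightarrow> x = (\<lambda>_. 0)"
    and hom: "x \<in> l1 \<Longrightarrow> N (vscale c x) = \<bar>c\<bar> * N x"
    and tri: "x \<in> l1 \<Longrightarrow> y \<in> l1 \<Longrightarrow> N (vadd x y) \<le> N x + N y"
    and lo: "0 < lo" and hi: "0 < hi"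
    and blo: "x \<in> l1 \<Longrightarrow> lo * l1norm x \<le> N x"
    and bhi: "x \<in> l1 \<Longrightarrow> N x \<le> hi * l1norm x"
begin

definition aa where "aa k = N (ebasis k)"
definition ww where "ww k = aa k / tt k"
definition pp where "pp k = vscale (tt k / aa k) (ebasis k)"
definition EE where "EE = {vscale (real n / real (n + 1) / N (ebasis (n - 1))) (ebasis (n - 1)) | n. n \<ge> 1}
             \<union> {(\<lambda>_. 0)}"
definition SS where "SS = {x \<in> l1. (\<forall>k. 0 \<le> x k) \<and> (\<forall>m. (\<Sum>k<m. x k * ww k) \<le> 1)}"

lemma N_nonneg: "x \<in> l1 \<Longrightarrow> 0 \<le> N x"
  using blo[of x] l1norm_nonneg[of x] lo by (meson order.trans mult_nonneg_nonneg less_imp_le)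

lemma aa_pos: "0 < aa k"
  using blo[OF ebasis_l1, of k] lo by (simp add: aa_def l1norm_ebasis)
lemma aa_le: "aa k \<le> hi"
  using bhi[OF ebasis_l1, of k] by (simp add: aa_def l1norm_ebasis)
lemma ww_pos: "0 < ww k" using aa_pos tt_pos by (simp add: ww_def)
lemma ww_le: "ww k \<le> 2 * hi"
proof -
  have "aa k / tt k \<le> hi / (1/2)"
    using aa_le aa_pos tt_pos tt_ge hi by (intro frac_le) auto
  thus ?thesis by (simp add: ww_def)
qed

lemma pp_l1: "pp k \<in> l1" by (simp add: pp_def vscale_l1 ebasis_l1)
lemma N_pp: "N (pp k) = tt k"
  using hom[OF ebasis_l1, of "tt k / aa k" k] aa_pos[of k] tt_pos[of k]
  by (simp add: pp_def aa_def[symmetric])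

lemma EE_eq: "EE = range pp \<union> {(\<lambda>_. 0)}"
proof -
  have "{vscale (real n / real (n + 1) / N (ebasis (n - 1))) (ebasis (n - 1)) | n. n \<ge> 1} = range pp"
  proof safe
    fix n :: nat assume "n \<ge> 1"
    then obtain k where "n = Suc k" by (cases n) auto
    thus "vscale (real n / real (n + 1) / N (ebasis (n - 1))) (ebasis (n - 1)) \<in> range pp"
      by (auto simp: pp_def tt_def aa_def)
  next
    fix k
    show "\<exists>n. pp k = vscale (real n / real (n + 1) / N (ebasis (n - 1))) (ebasis (n - 1)) \<and> n \<ge> 1"
      by (rule exI[of _ "Suc k"]) (simp add: pp_def tt_def aa_def)
  qed
  thus ?thesis by (simp add: EE_def)
qed

lemma N_vsub_sym: "x \<in> l1 \<Longrightarrow> y \<in> l1 \<Longrightarrow> N (vsub x y) = N (vsub y x)"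
proof -
  assume "x \<in> l1" "y \<in> l1"
  have "vsub x y = vscale (-1) (vsub y x)" by (auto simp: vsub_def vscale_def)
  thus ?thesis using hom[OF vsub_l1[OF \<open>y \<in> l1\<close> \<open>x \<in> l1\<close>], of "-1"] by simp
qed

lemma NW:
  assumes C: "wstar_closed C" and x: "x \<in> l1" and ap: "\<forall>e>0. \<exists>s\<in>C. N (vsub s x) < e"
  shows "x \<in> C"
proof -
  have Cl1: "C \<subseteq> l1" using C by (simp add: wstar_closed_def)
  have "\<forall>F e. finite F \<and> F \<subseteq> c0 \<and> 0 < e \<longrightarrow> (\<exists>s\<in>C. \<forall>y\<in>F. \<bar>pair (vsub s x) y\<bar> < e)"
  proof (intro allI impI)
    fix F e assume H: "finite F \<and> F \<subseteq> c0 \<and> 0 < (e::real)"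
    have "\<forall>y\<in>F. \<exists>B>0. \<forall>n. \<bar>y n\<bar> \<le> B"
    proof
      fix y assume "y \<in> F"
      hence "y \<longlonglongrightarrow> 0" using H by (auto simp: c0_def)
      hence "Bseq y" using convergent_imp_Bseq convergentI by blast
      thus "\<exists>B>0. \<forall>n. \<bar>y n\<bar> \<le> B" unfolding Bseq_def by auto
    qed
    then obtain Bf where Bf: "\<forall>y\<in>F. Bf y > 0 \<and> (\<forall>n. \<bar>y n\<bar> \<le> Bf y)" by metis
    define B where "B = 1 + sum Bf F"
    have snn: "0 \<le> sum Bf F" using Bf by (intro sum_nonneg) auto
    have Bpos: "0 < B" using snn by (simp add: B_def)
    have Bge: "\<bar>y n\<bar> \<le> B" if "y \<in> F" for y n
    proof -
      have "Bf y \<le> sum Bf F" using H Bf that by (intro member_le_sum) auto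
      thus ?thesis using Bf that unfolding B_def by (meson add_increasing order.trans zero_le_one)
    qed
    have "0 < lo * e / B" using lo H Bpos by simp
    then obtain s where s: "s \<in> C" "N (vsub s x) < lo * e / B" using ap by blast
    have sl1: "vsub s x \<in> l1" using s Cl1 x vsub_l1 by blast
    have "lo * l1norm (vsub s x) < lo * (e / B)" using blo[OF sl1] s(2) by simp
    hence nl: "l1norm (vsub s x) < e / B" using lo by (meson mult_less_cancel_left_pos)
    show "\<exists>s\<in>C. \<forall>y\<in>F. \<bar>pair (vsub s x) y\<bar> < e"
    proof (intro bexI[OF _ s(1)] ballI)
      fix y assume "y \<in> F"
      have "\<bar>pair (vsub s x) y\<bar> \<le> B * l1norm (vsub s x)"
        by (rule pair_bound[OF sl1 Bge[OF \<open>y \<in> F\<close>]])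
      also have "\<dots> < B * (e / B)" using nl Bpos by (rule mult_strict_left_mono)
      also have "\<dots> = e" using Bpos by simp
      finally show "\<bar>pair (vsub s x) y\<bar> < e" .
    qed
  qed
  thus ?thesis using C x unfolding wstar_closed_def by blast
qed

end


context eqn begin

lemma pp_S: "pp k \<in> SS"
proof -
  have "(\<Sum>j<m. pp k j * ww j) \<le> 1" for m
  proof -
    have "(\<Sum>j<m. pp k j * ww j) = (\<Sum>j<m. if j = k then tt k / aa k * ww k else 0)"
      by (rule sum.cong) (auto simp: pp_def vscale_def ebasis_def)
    also have "\<dots> = (if k < m then tt k / aa k * ww k else 0)" by simp
    also have "\<dots> \<le> 1" using aa_pos[of k] tt_pos[of k] by (simp add: ww_def)
    finally show ?thesis .
  qed
  moreover have "0 \<le> pp k j" for j using aa_pos[of k] tt_pos[of k]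
    by (simp add: pp_def vscale_def ebasis_def)
  ultimately show ?thesis using pp_l1 by (simp add: SS_def)
qed

lemma zero_S: "(\<lambda>_. 0) \<in> SS" by (simp add: SS_def zero_l1)

lemma EE_S: "EE \<subseteq> SS" using pp_S zero_S by (auto simp: EE_eq)

lemma conv_S: "conv_set SS"
  unfolding conv_set_def
proof (intro ballI allI impI)
  fix x y and t :: real assume x: "x \<in> SS" and y: "y \<in> SS" and t: "0 \<le> t \<and> t \<le> 1"
  let ?z = "vadd (vscale (1 - t) x) (vscale t y)"
  have l: "?z \<in> l1" using x y by (auto simp: SS_def intro!: vadd_l1 vscale_l1)
  have nn: "0 \<le> ?z k" for k using x y t by (auto simp: SS_def vadd_def vscale_def)
  have sm: "(\<Sum>k<m. ?z k * ww k) \<le> 1" for m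
  proof -
    have "(\<Sum>k<m. ?z k * ww k) = (\<Sum>k<m. (1-t)*(x k*ww k) + t*(y k*ww k))"
      by (rule sum.cong) (auto simp: vadd_def vscale_def algebra_simps)
    also have "\<dots> = (1-t)*(\<Sum>k<m. x k*ww k) + t*(\<Sum>k<m. y k*ww k)"
      by (simp add: sum.distrib sum_distrib_left)
    finally have e: "(\<Sum>k<m. ?z k * ww k) = (1-t)*(\<Sum>k<m. x k*ww k) + t*(\<Sum>k<m. y k*ww k)" .
    have "(1-t)*(\<Sum>k<m. x k*ww k) \<le> (1-t)*1" using x t by (intro mult_left_mono) (auto simp: SS_def)
    moreover have "t*(\<Sum>k<m. y k*ww k) \<le> t*1" using y t by (intro mult_left_mono) (auto simp: SS_def)
    ultimately show ?thesis using e by simp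
  qed
  show "?z \<in> SS" using l nn sm by (simp add: SS_def)
qed

lemma wstar_S: "wstar_closed SS"
  unfolding wstar_closed_def
proof (intro conjI ballI impI)
  show "SS \<subseteq> l1" by (auto simp: SS_def)
  fix x assume x: "x \<in> l1"
    and ap: "\<forall>F e. finite F \<and> F \<subseteq> c0 \<and> 0 < e \<longrightarrow> (\<exists>s\<in>SS. \<forall>y\<in>F. \<bar>pair (vsub s x) y\<bar> < e)"
  have nn: "0 \<le> x k" for k
  proof (rule ccontr)
    assume "\<not> 0 \<le> x k"
    have ec: "ebasis k \<in> c0"
    proof -
      have "eventually (\<lambda>n. ebasis k n = 0) sequentially"
        by (rule eventually_sequentiallyI[of "Suc k"]) (auto simp: ebasis_def)
      hence "ebasis k \<longlonglongrightarrow> 0" by (rule tendsto_eventually)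
      thus ?thesis by (simp add: c0_def)
    qed
    obtain s where s: "s \<in> SS" "\<bar>pair (vsub s x) (ebasis k)\<bar> < - x k"
      using ap[rule_format, of "{ebasis k}" "- x k"] ec \<open>\<not> 0 \<le> x k\<close> by auto
    have "pair (vsub s x) (ebasis k) = s k - x k"
      by (subst pair_fin[of "{k}"]) (auto simp: ebasis_def vsub_def)
    moreover have "0 \<le> s k" using s by (auto simp: SS_def)
    ultimately show False using s(2) by linarith
  qed
  have sm: "(\<Sum>k<m. x k * ww k) \<le> 1" for m
  proof (rule ccontr)
    assume nt: "\<not> (\<Sum>k<m. x k * ww k) \<le> 1"
    define y where "y n = (if n < m then ww n else 0)" for n
    have yc: "y \<in> c0"
    proof -
      have "eventually (\<lambda>n. y n = 0) sequentially"
        by (rule eventually_sequentiallyI[of m]) (auto simp: y_def)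
      hence "y \<longlonglongrightarrow> 0" by (rule tendsto_eventually)
      thus ?thesis by (simp add: c0_def)
    qed
    obtain s where s: "s \<in> SS" "\<bar>pair (vsub s x) y\<bar> < (\<Sum>k<m. x k * ww k) - 1"
      using ap[rule_format, of "{y}" "(\<Sum>k<m. x k * ww k) - 1"] yc nt by auto
    have "pair (vsub s x) y = (\<Sum>k<m. s k * ww k) - (\<Sum>k<m. x k * ww k)"
      by (subst pair_fin[of "{..<m}"]) (auto simp: y_def vsub_def sum_subtractf left_diff_distrib)
    moreover have "(\<Sum>k<m. s k * ww k) \<le> 1" using s by (auto simp: SS_def)
    ultimately show False using s(2) by linarith
  qed
  show "x \<in> SS" using x nn sm by (simp add: SS_def)
qed

lemma trunc_in:
  assumes C: "conv_set C" "EE \<subseteq> C"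
  shows "\<forall>x. (\<forall>k. 0 \<le> x k) \<and> (\<Sum>k<m. x k * ww k) \<le> 1 \<longrightarrow> trunc m x \<in> C"
proof (induction m)
  case 0
  have "trunc 0 x = (\<lambda>_. 0)" for x by (simp add: trunc_def)
  thus ?case using C(2) by (simp add: EE_def)
next
  case (Suc m)
  have ppC: "pp k \<in> C" for k using C(2) by (auto simp: EE_eq)
  show ?case
  proof (intro allI impI)
    fix x assume H: "(\<forall>k. 0 \<le> x k) \<and> (\<Sum>k<Suc m. x k * ww k) \<le> 1"
    define l where "l = x m * ww m"
    have tnn: "0 \<le> x k * ww k" for k using H ww_pos[of k] by simp
    have s0: "0 \<le> (\<Sum>k<m. x k * ww k)" using tnn by (simp add: sum_nonneg)
    have sle: "(\<Sum>k<m. x k * ww k) \<le> 1 - l" using H by (simp add: l_def)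
    have l0: "0 \<le> l" using tnn by (simp add: l_def)
    show "trunc (Suc m) x \<in> C"
    proof (cases "l < 1")
      case False
      hence s00: "(\<Sum>k<m. x k * ww k) = 0" using s0 sle by linarith
      have xz: "x k = 0" if "k < m" for k
      proof -
        have "x k * ww k = 0" using sum_nonneg_eq_0_iff[of "{..<m}" "\<lambda>k. x k * ww k"] s00 tnn that by auto
        thus ?thesis using ww_pos[of k] by simp
      qed
      have l1: "l = 1" using False s0 sle by linarith
      have xm: "x m = tt m / aa m" using l1 aa_pos[of m] tt_pos[of m]
        by (simp add: l_def ww_def field_simps)
      have "trunc (Suc m) x = pp m"
        by (rule ext) (auto simp: trunc_def pp_def vscale_def ebasis_def xz xm)
      thus ?thesis using ppC by simp
    next
      case True
      define z where "z = vscale (1 / (1 - l)) x"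
      have zn: "0 \<le> z k" for k using H True by (simp add: z_def vscale_def)
      have "(\<Sum>k<m. z k * ww k) = (\<Sum>k<m. x k * ww k) / (1 - l)"
        by (simp add: z_def vscale_def sum_divide_distrib)
      also have "\<dots> \<le> 1" using sle True by simp
      finally have "trunc m z \<in> C" using Suc.IH zn by blast
      hence "vadd (vscale (1 - l) (trunc m z)) (vscale l (pp m)) \<in> C"
        using C(1) ppC[of m] l0 True unfolding conv_set_def by auto
      moreover have "vadd (vscale (1 - l) (trunc m z)) (vscale l (pp m)) = trunc (Suc m) x"
      proof (rule ext)
        fix n
        show "vadd (vscale (1 - l) (trunc m z)) (vscale l (pp m)) n = trunc (Suc m) x n"
          using True aa_pos[of m] tt_pos[of m]
          by (cases "n < m"; cases "n = m")
             (auto simp: vadd_def vscale_def trunc_def z_def pp_def ebasis_def l_def ww_def)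
      qed
      ultimately show ?thesis by simp
    qed
  qed
qed

lemma S_approx:
  assumes C: "conv_set C" "EE \<subseteq> C" and x: "x \<in> SS" and e: "0 < e"
  shows "\<exists>s\<in>C. N (vsub s x) < e"
proof -
  have xl: "x \<in> l1" using x by (simp add: SS_def)
  obtain m where m: "l1norm (vsub (trunc m x) x) < e / hi" using tail_small[OF xl, of "e/hi"] e hi by auto
  have "trunc m x \<in> C" using trunc_in[OF C, of m] x by (auto simp: SS_def)
  moreover have "N (vsub (trunc m x) x) < e"
  proof -
    have "N (vsub (trunc m x) x) \<le> hi * l1norm (vsub (trunc m x) x)"
      by (rule bhi[OF vsub_l1[OF trunc_l1 xl]])
    also have "\<dots> < hi * (e / hi)" using m hi by (rule mult_strict_left_mono)
    also have "\<dots> = e" using hi by simp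
    finally show ?thesis .
  qed
  ultimately show ?thesis by blast
qed

lemma S_sub_w:
  assumes "EE \<subseteq> C" "conv_set C" "wstar_closed C" shows "SS \<subseteq> C"
proof
  fix x assume x: "x \<in> SS"
  have "x \<in> l1" using x by (simp add: SS_def)
  moreover have "\<forall>e>0. \<exists>s\<in>C. N (vsub s x) < e"
    using S_approx[OF assms(2) assms(1) x] by blast
  ultimately show "x \<in> C" by (rule NW[OF assms(3)])
qed

lemma S_sub_n:
  assumes "EE \<subseteq> C" "conv_set C" "norm_closed N C" shows "SS \<subseteq> C"
proof
  fix x assume x: "x \<in> SS"
  have "x \<in> l1" using x by (simp add: SS_def)
  moreover have "\<forall>e>0. \<exists>s\<in>C. N (vsub s x) < e"
    using S_approx[OF assms(2) assms(1) x] by blast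
  ultimately show "x \<in> C" using assms(3) unfolding norm_closed_def by blast
qed

lemma norm_S: "norm_closed N SS"
  unfolding norm_closed_def
proof (intro conjI ballI impI)
  show "SS \<subseteq> l1" by (auto simp: SS_def)
  fix x assume "x \<in> l1" "\<forall>e>0. \<exists>s\<in>SS. N (vsub s x) < e"
  thus "x \<in> SS" using NW[OF wstar_S] by blast
qed

lemma K_eq: "wstar_closed_hull EE = SS"
  unfolding wstar_closed_hull_def
proof (rule antisym)
  show "\<Inter> {C. EE \<subseteq> C \<and> conv_set C \<and> wstar_closed C} \<subseteq> SS"
    using EE_S conv_S wstar_S by (intro Inter_lower) simp
  show "SS \<subseteq> \<Inter> {C. EE \<subseteq> C \<and> conv_set C \<and> wstar_closed C}"
    using S_sub_w by (intro Inter_greatest) simp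
qed

lemma Kn_eq: "norm_closed_hull N EE = SS"
  unfolding norm_closed_hull_def
proof (rule antisym)
  show "\<Inter> {C. EE \<subseteq> C \<and> conv_set C \<and> norm_closed N C} \<subseteq> SS"
    using EE_S conv_S norm_S by (intro Inter_lower) simp
  show "SS \<subseteq> \<Inter> {C. EE \<subseteq> C \<and> conv_set C \<and> norm_closed N C}"
    using S_sub_n by (intro Inter_greatest) simp
qed

end


context eqn begin

lemma N_zero: "N (\<lambda>_. 0) = 0" using zer[OF zero_l1] by simp

lemma N_trunc: "(\<forall>k. 0 \<le> x k) \<Longrightarrow> N (trunc m x) \<le> (\<Sum>k<m. x k * aa k)"
proof (induction m)
  case 0
  have "trunc 0 x = (\<lambda>_. 0)" by (simp add: trunc_def)
  thus ?case by (simp add: N_zero)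
next
  case (Suc m)
  have "trunc (Suc m) x = vadd (trunc m x) (vscale (x m) (ebasis m))"
    by (rule ext) (auto simp: trunc_def vadd_def vscale_def ebasis_def less_Suc_eq)
  hence "N (trunc (Suc m) x) \<le> N (trunc m x) + N (vscale (x m) (ebasis m))"
    using tri[OF trunc_l1 vscale_l1[OF ebasis_l1]] by simp
  also have "N (vscale (x m) (ebasis m)) = x m * aa m"
    using hom[OF ebasis_l1] Suc.prems by (simp add: aa_def)
  finally show ?case using Suc by simp
qed

lemma N_lt1:
  assumes x: "x \<in> SS" shows "N x < 1"
proof -
  have xl: "x \<in> l1" and nn: "\<And>k. 0 \<le> x k" and ps: "\<And>m. (\<Sum>k<m. x k * ww k) \<le> 1"
    using x by (auto simp: SS_def)
  have sa: "summable (\<lambda>n. \<bar>x n\<bar>)" using l1_summ[OF xl] .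
  have bq: "norm (x n * aa n) \<le> hi * \<bar>x n\<bar>" for n
    using mult_left_mono[OF aa_le[of n] nn[of n]] nn[of n] aa_pos[of n] by (simp add: abs_mult mult.commute)
  have bw: "norm (x n * ww n) \<le> (2*hi) * \<bar>x n\<bar>" for n
    using mult_left_mono[OF ww_le[of n] nn[of n]] nn[of n] ww_pos[of n] by (simp add: abs_mult mult.commute)
  have sQ: "summable (\<lambda>k. x k * aa k)"
    using summable_comparison_test'[OF summable_mult[OF sa, of hi] bq] .
  have sW: "summable (\<lambda>k. x k * ww k)"
    using summable_comparison_test'[OF summable_mult[OF sa, of "2*hi"] bw] .
  define Q where "Q = (\<Sum>k. x k * aa k)"
  have NQ: "N x \<le> Q"
  proof (rule field_le_epsilon)
    fix e :: real assume e: "0 < e"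
    obtain m where m: "l1norm (vsub (trunc m x) x) < e / hi" using tail_small[OF xl, of "e/hi"] e hi by auto
    have xe: "x = vadd (trunc m x) (vsub x (trunc m x))" by (auto simp: vadd_def vsub_def)
    have t1: "N x \<le> N (trunc m x) + N (vsub x (trunc m x))"
      using tri[OF trunc_l1 vsub_l1[OF xl trunc_l1]] xe by metis
    have "N (vsub x (trunc m x)) = N (vsub (trunc m x) x)" by (rule N_vsub_sym[OF xl trunc_l1])
    also have "\<dots> \<le> hi * l1norm (vsub (trunc m x) x)" by (rule bhi[OF vsub_l1[OF trunc_l1 xl]])
    also have "\<dots> < hi * (e / hi)" using m hi by (rule mult_strict_left_mono)
    also have "\<dots> = e" using hi by simp
    finally have t2: "N (vsub x (trunc m x)) < e" .
    have t3: "(\<Sum>k<m. x k * aa k) \<le> Q" unfolding Q_def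
      by (rule sum_le_suminf[OF sQ]) (use nn aa_pos in \<open>auto intro: mult_nonneg_nonneg less_imp_le\<close>)
    have "N (trunc m x) \<le> Q" using N_trunc[of x m] nn t3 by fastforce
    thus "N x \<le> Q + e" using t1 t2 by linarith
  qed
  have W1: "(\<Sum>k. x k * ww k) \<le> 1" by (rule suminf_le_const[OF sW ps])
  show ?thesis
  proof (cases "x = (\<lambda>_. 0)")
    case True thus ?thesis by (simp add: N_zero)
  next
    case False
    then obtain j where "x j \<noteq> 0" by auto
    hence xj: "0 < x j" using nn[of j] by simp
    define g where "g k = x k * ww k - x k * aa k" for k
    have gk: "g k = x k * ww k * (1 - tt k)" for k
      using aa_pos[of k] tt_pos[of k] by (simp add: g_def ww_def field_simps)
    have gnn: "0 \<le> g k" for k using nn[of k] ww_pos[of k] tt_lt1[of k] by (simp add: gk)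
    have gj: "0 < g j" using xj ww_pos[of j] tt_lt1[of j] by (simp add: gk)
    have sg: "summable g" unfolding g_def by (rule summable_diff[OF sW sQ])
    have "0 < suminf g" by (rule suminf_pos2[OF sg gnn gj])
    moreover have "suminf g = (\<Sum>k. x k * ww k) - Q"
      unfolding g_def Q_def by (rule suminf_diff[OF sW sQ, symmetric])
    ultimately show ?thesis using NQ W1 by linarith
  qed
qed

end


theorem mainTheorem7:
  fixes N :: "(nat \<Rightarrow> real) \<Rightarrow> real"
    and E K :: "(nat \<Rightarrow> real) set"
  assumes "equiv_l1_norm N"
    and "E = {vscale (real n / real (n + 1) / N (ebasis (n - 1))) (ebasis (n - 1)) | n. n \<ge> 1}
             \<union> {(\<lambda>_. 0)}"
    and "K = wstar_closed_hull E"
  shows "K = norm_closed_hull N E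
       \<and> K \<subseteq> {x\<in>l1. N x \<le> 1}
       \<and> (SUP k\<in>K. N k) = 1
       \<and> \<not> (\<exists>k\<in>K. N k = 1)
       \<and> norm_closed N K \<and> (\<exists>M. \<forall>k\<in>K. N k \<le> M) \<and> conv_set K
       \<and> \<not> remotal N K (\<lambda>_. 0)"
proof -
  from assms(1) obtain lo hi where lh: "0 < lo" "0 < hi"
    "\<forall>x\<in>l1. lo * l1norm x \<le> N x \<and> N x \<le> hi * l1norm x"
    unfolding equiv_l1_norm_def by blast
  interpret eqn N lo hi
    using assms(1) lh unfolding equiv_l1_norm_def by unfold_locales auto
  have EE: "E = EE" using assms(2) by (simp add: EE_def)
  have KS: "K = SS" using assms(3) EE K_eq by simp
  have lt: "\<And>k. k \<in> K \<Longrightarrow> N k < 1" using N_lt1 KS by simp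
  have Sl1: "SS \<subseteq> l1" by (auto simp: SS_def)
  have bdd: "bdd_above (N ` SS)" using N_lt1 by (auto intro!: bdd_aboveI[of _ 1] less_imp_le)
  have sup: "(SUP k\<in>SS. N k) = 1"
  proof (rule antisym)
    show "(SUP k\<in>SS. N k) \<le> 1" by (rule cSUP_least) (use zero_S N_lt1 in \<open>auto intro: less_imp_le\<close>)
    have up: "tt n \<le> (SUP k\<in>SS. N k)" for n
      using cSUP_upper[OF pp_S[of n] bdd] N_pp by simp
    show "1 \<le> (SUP k\<in>SS. N k)"
    proof (rule ccontr)
      let ?s = "(SUP k\<in>SS. N k)"
      assume "\<not> 1 \<le> ?s"
      hence s1: "?s < 1" by simp
      obtain n where n: "1 / (1 - ?s) < real n" using reals_Archimedean2 by blast
      have "1 < real n * (1 - ?s)" using n s1 by (simp add: field_simps)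
      hence "?s * (real n + 2) < real n + 1" using s1 by (simp add: algebra_simps)
      hence "?s < tt n" by (simp add: tt_def field_simps)
      thus False using up[of n] by simp
    qed
  qed
  have nrem: "\<not> remotal N K (\<lambda>_. 0)"
  proof
    assume "remotal N K (\<lambda>_. 0)"
    then obtain c where c: "c \<in> SS" "N (vsub (\<lambda>_. 0) c) = (SUP c\<in>SS. N (vsub (\<lambda>_. 0) c))"
      unfolding remotal_def KS by blast
    have eqv: "N (vsub (\<lambda>_. 0) d) = N d" if "d \<in> SS" for d
    proof -
      have "vsub (\<lambda>_. 0) d = vscale (-1) d" by (auto simp: vsub_def vscale_def)
      thus ?thesis using hom[of d "-1"] Sl1 that by auto
    qed
    have "(SUP c\<in>SS. N (vsub (\<lambda>_. 0) c)) = (SUP c\<in>SS. N c)"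
      by (rule SUP_cong) (auto simp: eqv)
    hence "N c = 1" using c eqv sup by simp
    thus False using N_lt1[OF c(1)] by simp
  qed
  have c1: "K = norm_closed_hull N E" using KS EE Kn_eq by simp
  have c2: "K \<subseteq> {x\<in>l1. N x \<le> 1}" using KS Sl1 N_lt1 by (auto intro: less_imp_le)
  have c3: "(SUP k\<in>K. N k) = 1" using KS sup by simp
  have c4: "\<not> (\<exists>k\<in>K. N k = 1)" using lt by fastforce
  have c5: "norm_closed N K" using KS norm_S by simp
  have c6: "\<exists>M. \<forall>k\<in>K. N k \<le> M" using lt by (intro exI[of _ 1]) (auto intro: less_imp_le)
  have c7: "conv_set K" using KS conv_S by simp
  show ?thesis using c1 c2 c3 c4 c5 c6 c7 nrem by blast
qed


end
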